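(* Let $R$ be a commutative ring and $d\in\mathbb{N}$. Then $H_a(\widetilde{S}_{-*}M(d))=0$ for every $a\ge1$; equivalently, for every $n\in\mathbb{N}$ and every $a\ge1$, the homology of the complex of $R$-modules $(\widetilde{S}_{-*}M(d))([n])$ at the term $(\widetilde{S}_{-a}M(d))([n])$ vanishes.
   Context: Let $R$ be a commutative ring. $\mathrm{FI}$ denotes the category of finite sets and injective maps; an $\mathrm{FI}$-module is a covariant functor from $\mathrm{FI}$ to $R$-modules. For $n\in\mathbb{N}$, $[n]=\{1,\dots,n\}$. For $d\in\mathbb{N}$, $M(d)$ is the $\mathrm{FI}$-module with $M(d)(X)=R\,\mathrm{Hom}_{\mathrm{FI}}([d],X)$ (free $R$-module on injections $[d]\to X$), with injections $X\to X'$ acting by post-composition. The complex $\widetilde{S}_{-*}V$: for a finite set $I$, $\det(I)=\bigwedge^{|I|}RI$ where $RI$ is free on $I$ ($\det(\emptyset)=R$). For an $\mathrm{FI}$-module $V$, finite set $X$, $T\subset X$, $i\in X\setminus T$, $v\in V(T)$, write $i(v)$ for the image of $v$ under the inclusion $T\to T\cup\{i\}$. Set $(\widetilde{S}_{-a}V)(X)=\bigoplus_{I\subset X,|I|=a}V(X\setminus I)\otimes_R\det(I)$, with differential $d(v\otimes i_1\wedge\cdots\wedge i_a)=\sum_{p=1}^a(-1)^p i_p(v)\otimes i_1\wedge\cdots\widehat{i_p}\cdots\wedge i_a$ for $v\in V(X\setminus I)$, $I=\{i_1,\dots,i_a\}$; an injection $\alpha:X\to X'$ acts by $v\otimes i_1\wedge\cdots\wedge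 i_a\mapsto\alpha(v)\otimes\alpha(i_1)\wedge\cdots\wedge\alpha(i_a)$. Thus $\cdots\to\widetilde{S}_{-1}V\to\widetilde{S}_0V\to0$ is a complex of $\mathrm{FI}$-modules, and $H_a(\widetilde{S}_{-*}V)$ denotes its homology at $\widetilde{S}_{-a}V$. *)

theory Defs
  imports "HOL-Library.FuncSet"
begin

text \<open>The R-module (S~_{-a} M(d))([n]) = (+)_{I \<subseteq> [n], |I| = a} R Hom_FI([d],[n]-I) (x) det(I)
  is free with basis the pairs (I, f) with I \<subseteq> [n], |I| = a and f : [d] \<rightarrow> [n] - I injective
  (f represented extensionally on {1..d}); the pair (I,f) stands for
  f (x) i_1 \<and> ... \<and> i_a with i_1 < ... < i_a the elements of I in increasing order.\<close>

definition Sbasis :: "nat \<Rightarrow> nat \<Rightarrow> nat \<Rightarrow> (nat set \<times> (nat \<Rightarrow> nat)) set" where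
  "Sbasis d n a = {(I, f). I \<subseteq> {1..n} \<and> card I = a \<and>
      f \<in> {1..d} \<rightarrow>\<^sub>E ({1..n} - I) \<and> inj_on f {1..d}}"

definition Schains :: "nat \<Rightarrow> nat \<Rightarrow> nat \<Rightarrow> (nat set \<times> (nat \<Rightarrow> nat) \<Rightarrow> 'r::comm_ring_1) set" where
  "Schains d n a = {c. \<forall>x. x \<notin> Sbasis d n a \<longrightarrow> c x = 0}"

text \<open>Position p (1-indexed) of i among the elements of I listed increasingly.\<close>
definition wedge_pos :: "nat \<Rightarrow> nat set \<Rightarrow> nat" where
  "wedge_pos i I = card {j \<in> I. j \<le> i}"

text \<open>The differential d(f (x) i_1\<and>...\<and>i_a) = \<Sum>_p (-1)^p i_p(f) (x) i_1\<and>..^i_p..\<and>i_a,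
  where i_p(f) is f composed with the inclusion, i.e. the same map f;
  extended R-linearly from S~_{-a} to S~_{-(a-1)}.\<close>
definition Sdiff :: "nat \<Rightarrow> nat \<Rightarrow> nat \<Rightarrow> (nat set \<times> (nat \<Rightarrow> nat) \<Rightarrow> 'r::comm_ring_1)
    \<Rightarrow> (nat set \<times> (nat \<Rightarrow> nat) \<Rightarrow> 'r)" where
  "Sdiff d n a c = (\<lambda>(J, g). \<Sum>(I, f)\<in>Sbasis d n a. \<Sum>i\<in>I.
      if I - {i} = J \<and> f = g then (-1) ^ wedge_pos i I * c (I, f) else 0)"

end

theory Submission
  imports Defs
begin

lemma Sbasis_finite: "finite (Sbasis d n a)"
proof -
  have "Sbasis d n a \<subseteq> Pow {1..n} \<times> ({1..d} \<rightarrow>\<^sub>E {1..n})"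
    unfolding Sbasis_def by (auto simp: PiE_def Pi_def)
  moreover have "finite (Pow {1..n} \<times> ({1..d::nat} \<rightarrow>\<^sub>E {1..n::nat}))"
    by (intro finite_cartesian_product finite_PiE) auto
  ultimately show ?thesis by (rule finite_subset)
qed

lemma Sdiff_alt:
  assumes "c \<in> Schains d n a"
  shows "Sdiff d n a c (J, g) = (\<Sum>i\<in>({1..n} - g`{1..d}) - J.
            (-1)^wedge_pos i (insert i J) * c (insert i J, g))"
proof -
  let ?B = "Sbasis d n a" let ?T = "({1..n} - g`{1..d}) - J"
  have fin: "finite ?B" by (rule Sbasis_finite)
  have finT: "finite ?T" by auto
  have step1: "(\<Sum>i\<in>I. if I - {i} = J \<and> f = g then (-1)^wedge_pos i I * c (I,f) else 0)
     = (\<Sum>i\<in>?T. if I = insert i J \<and> f = g then (-1)^wedge_pos i I * c (I,f) else 0)"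
    if "(I,f) \<in> ?B" for I f
  proof -
    from that have I: "I \<subseteq> {1..n}" "f \<in> {1..d} \<rightarrow>\<^sub>E ({1..n} - I)" unfolding Sbasis_def by auto
    have fI: "finite I" using I finite_subset by blast
    have "(\<Sum>i\<in>I. if I - {i} = J \<and> f = g then (-1)^wedge_pos i I * c (I,f) else 0)
        = (\<Sum>i\<in>{i\<in>I. I - {i} = J \<and> f = g}. (-1)^wedge_pos i I * c (I,f))"
      by (rule sum.inter_filter[OF fI, symmetric])
    also have "{i\<in>I. I - {i} = J \<and> f = g} = {i\<in>?T. I = insert i J \<and> f = g}"
      using I by (auto simp: PiE_def Pi_def)
    also have "(\<Sum>i\<in>{i\<in>?T. I = insert i J \<and> f = g}. (-1)^wedge_pos i I * c (I,f))
        = (\<Sum>i\<in>?T. if I = insert i J \<and> f = g then (-1)^wedge_pos i I * c (I,f) else 0)"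
      by (rule sum.inter_filter[OF finT])
    finally show ?thesis .
  qed
  have "Sdiff d n a c (J, g) = (\<Sum>x\<in>?B. \<Sum>i\<in>?T. if fst x = insert i J \<and> snd x = g then (-1)^wedge_pos i (fst x) * c x else 0)"
    unfolding Sdiff_def prod.case
  proof (rule sum.cong[OF refl])
    fix x assume "x \<in> ?B"
    then obtain I f where x: "x = (I,f)" "(I,f) \<in> ?B" by (cases x) auto
    show "(case x of (I, f) \<Rightarrow> \<Sum>i\<in>I. if I - {i} = J \<and> f = g then (-1)^wedge_pos i I * c (I,f) else 0)
      = (\<Sum>i\<in>?T. if fst x = insert i J \<and> snd x = g then (-1)^wedge_pos i (fst x) * c x else 0)"
      unfolding x(1) prod.case fst_conv snd_conv by (rule step1[OF x(2)])
  qed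
  also have "\<dots> = (\<Sum>i\<in>?T. \<Sum>x\<in>?B. if x = (insert i J, g) then (-1)^wedge_pos i (insert i J) * c (insert i J, g) else 0)"
    by (subst sum.swap) (auto intro!: sum.cong)
  also have "\<dots> = (\<Sum>i\<in>?T. (-1)^wedge_pos i (insert i J) * c (insert i J, g))"
    using assms fin by (auto simp: Schains_def intro!: sum.cong)
  finally show ?thesis .
qed

lemma wp_min: assumes "finite J" "\<forall>j\<in>J. v < j" shows "wedge_pos v (insert v J) = 1"
proof -
  have "{j \<in> insert v J. j \<le> v} = {v}" using assms by auto
  thus ?thesis unfolding wedge_pos_def by simp
qed

lemma wp_shift: assumes "finite J" "v \<in> J" "v < i" "i \<notin> J"
  shows "wedge_pos i (insert i J) = Suc (wedge_pos i (insert i (J - {v})))"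
proof -
  have "{j \<in> insert i J. j \<le> i} = insert v {j \<in> insert i (J - {v}). j \<le> i}" using assms by auto
  moreover have "v \<notin> {j \<in> insert i (J - {v}). j \<le> i}" using assms by auto
  moreover have "finite {j \<in> insert i (J - {v}). j \<le> i}" using assms by auto
  ultimately show ?thesis unfolding wedge_pos_def by simp
qed

lemma ins_basis:
  assumes "(J,g) \<in> Sbasis d n a" "i \<in> ({1..n} - g`{1..d}) - J"
  shows "(insert i J, g) \<in> Sbasis d n (Suc a)"
proof -
  have "finite J" using assms(1) unfolding Sbasis_def by (auto intro: finite_subset)
  thus ?thesis using assms unfolding Sbasis_def by (auto simp: PiE_def Pi_def)
qed

lemma del_basis:
  assumes "(insert i J, g) \<in> Sbasis d n (Suc a)" "i \<notin> J"
  shows "(J,g) \<in> Sbasis d n a"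
proof -
  have "finite (insert i J)" using assms(1) unfolding Sbasis_def by (auto intro: finite_subset)
  thus ?thesis using assms unfolding Sbasis_def by (auto simp: PiE_def Pi_def)
qed

theorem proposition3p2:
  fixes d n a :: nat and c :: "nat set \<times> (nat \<Rightarrow> nat) \<Rightarrow> 'r::comm_ring_1"
  assumes "a \<ge> 1"
    and "c \<in> Schains d n a"
    and "Sdiff d n a c = (\<lambda>_. 0)"
  shows "\<exists>b \<in> Schains d n (Suc a). Sdiff d n (Suc a) b = c"
proof -
  define V where "V = (\<lambda>g::nat\<Rightarrow>nat. Min ({1..n} - g`{1..d}))"
  define b where "b = (\<lambda>(K,g). if (K,g) \<in> Sbasis d n (Suc a) \<and> V g \<in> K then - c (K - {V g}, g) else (0::'r))"
  have bS: "b \<in> Schains d n (Suc a)" unfolding Schains_def b_def by auto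
  have c0: "c x = 0" if "x \<notin> Sbasis d n a" for x using assms(2) that unfolding Schains_def by (cases x) auto
  have "Sdiff d n (Suc a) b (J, g) = c (J, g)" for J g
  proof -
    let ?T = "{1..n} - g`{1..d}"
    have D: "Sdiff d n (Suc a) b (J, g) = (\<Sum>i\<in>?T - J. (-1)^wedge_pos i (insert i J) * b (insert i J, g))"
      by (rule Sdiff_alt[OF bS])
    show ?thesis
    proof (cases "(J,g) \<in> Sbasis d n a")
      case False
      have "b (insert i J, g) = 0" if "i \<in> ?T - J" for i
        using del_basis[of i J g d n a] that False unfolding b_def by auto
      thus ?thesis using D c0[OF False] by simp
    next
      case True
      have JT: "J \<subseteq> ?T" and finJ: "finite J" and cJ: "card J = a"
        using True unfolding Sbasis_def by (auto simp: PiE_def Pi_def intro: finite_subset)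
      have "J \<noteq> {}" using cJ assms(1) by auto
      hence Tne: "?T \<noteq> {}" using JT by auto
      have finT: "finite ?T" by auto
      have vT: "V g \<in> ?T" unfolding V_def using Min_in[OF finT Tne] .
      have vmin: "V g \<le> i" if "i \<in> ?T" for i unfolding V_def using Min_le[OF finT that] .
      have bi: "b (insert i J, g) = (if V g \<in> insert i J then - c (insert i J - {V g}, g) else 0)"
        if "i \<in> ?T - J" for i using ins_basis[OF True that] unfolding b_def by simp
      show ?thesis
      proof (cases "V g \<in> J")
        case False
        have vTJ: "V g \<in> ?T - J" using vT False by auto
        have "Sdiff d n (Suc a) b (J, g) = (\<Sum>i\<in>?T - J. if i = V g then (-1)^wedge_pos i (insert i J) * b (insert i J, g) else 0)"
          unfolding D by (rule sum.cong[OF refl]) (use bi False in auto)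
        also have "\<dots> = (-1)^wedge_pos (V g) (insert (V g) J) * b (insert (V g) J, g)"
          using vTJ finT by (simp add: sum.delta')
        also have "wedge_pos (V g) (insert (V g) J) = 1"
        proof (rule wp_min[OF finJ], rule ballI)
          fix j assume "j \<in> J"
          hence "j \<in> ?T" "j \<noteq> V g" using JT False by auto
          thus "V g < j" using vmin[of j] by simp
        qed
        finally show ?thesis using bi[OF vTJ] False by (simp add: insert_Diff_if)
      next
        case True
        let ?J' = "J - {V g}"
        have "Sdiff d n a c (?J', g) = 0" using assms(3) by simp
        hence Z: "(\<Sum>i\<in>?T - ?J'. (-1)^wedge_pos i (insert i ?J') * c (insert i ?J', g)) = 0"
          using Sdiff_alt[OF assms(2)] by simp
        have TJ: "?T - ?J' = insert (V g) (?T - J)" using True vT by auto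
        have vn: "V g \<notin> ?T - J" using True by auto
        have "(\<Sum>i\<in>?T - ?J'. (-1)^wedge_pos i (insert i ?J') * c (insert i ?J', g))
           = (-1)^wedge_pos (V g) J * c (J, g) + (\<Sum>i\<in>?T - J. (-1)^wedge_pos i (insert i ?J') * c (insert i ?J', g))"
          unfolding TJ using finT vn True by (simp add: insert_absorb)
        also have "wedge_pos (V g) J = 1"
        proof -
          have "J = insert (V g) ?J'" using True by auto
          moreover have "wedge_pos (V g) (insert (V g) ?J') = 1"
          proof (rule wp_min, simp add: finJ, rule ballI)
            fix j assume "j \<in> ?J'"
            hence "j \<in> ?T" "j \<noteq> V g" using JT by auto
            thus "V g < j" using vmin[of j] by simp
          qed
          ultimately show ?thesis by simp
        qed
        also have "(\<Sum>i\<in>?T - J. (-1)^wedge_pos i (insert i ?J') * c (insert i ?J', g))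
             = Sdiff d n (Suc a) b (J, g)"
          unfolding D
        proof (rule sum.cong[OF refl])
          fix i assume i: "i \<in> ?T - J"
          have vi: "V g < i" using vmin[of i] i True by (cases "V g = i") auto
          have w: "wedge_pos i (insert i J) = Suc (wedge_pos i (insert i ?J'))"
            using wp_shift[OF finJ True vi] i by auto
          have e: "insert i J - {V g} = insert i ?J'" using vi by auto
          show "(-1)^wedge_pos i (insert i ?J') * c (insert i ?J', g)
              = (-1)^wedge_pos i (insert i J) * b (insert i J, g)"
            using bi[OF i] True w e by simp
        qed
        finally have "- c (J,g) + Sdiff d n (Suc a) b (J, g) = 0" using Z by simp
        thus ?thesis by (simp add: add_eq_0_iff)
      qed
    qed
  qed
  hence "Sdiff d n (Suc a) b = c" by (intro ext) (metis prod.collapse)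
  thus ?thesis using bS by blast
qed

end
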